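(* Let $(S_{11},S_{12},P_1)$ on $\mathcal H_1$ and $(S_{21},S_{22},P_2)$ on $\mathcal H_2$ be $\Gamma_3$-contractions with fundamental operator pairs $(F_1,F_2)$ and $(G_1,G_2)$ respectively. If there is a unitary $U:\mathcal H_1\to\mathcal H_2$ with $US_{11}=S_{21}U$, $US_{12}=S_{22}U$, $UP_1=P_2U$, then there is a unitary $V:\mathcal D_{P_1}\to\mathcal D_{P_2}$ with $VF_1V^*=G_1$ and $VF_2V^*=G_2$.
   Context: $\Gamma_3=\{(z_1+z_2+z_3,\,z_1z_2+z_2z_3+z_3z_1,\,z_1z_2z_3):|z_i|\le1\}$. A $\Gamma_3$-contraction is a commuting triple with Taylor joint spectrum in $\Gamma_3$ and $\|f(S_1,S_2,P)\|\le\sup_{\Gamma_3}|f|$ for rational $f$ with poles off $\Gamma_3$. $D_P=(I-P^*P)^{1/2}$, $\mathcal D_P=\overline{\operatorname{Ran}}D_P$. The fundamental operator pair of a $\Gamma_3$-contraction $(S_1,S_2,P)$ is the unique pair $F_1,F_2\in\mathcal B(\mathcal D_P)$ with $S_1-S_2^*P=D_PF_1D_P$ and $S_2-S_1^*P=D_PF_2D_P$. *)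

theory Defs
  imports "HOL-Analysis.Analysis"
begin

text \<open>A complex Hilbert space: a real Hilbert space (the real inner product being the
real part of the complex one) together with a compatible complex scalar multiplication.
The complex inner product is recovered by polarization; adjoints, unitaries and
orthogonality computed with respect to the real part coincide with the complex ones.\<close>

class complex_hilbert = real_inner + complete_space +
  fixes scaleC :: "complex \<Rightarrow> 'a \<Rightarrow> 'a"
  assumes scaleC_add_right: "scaleC c (x + y) = scaleC c x + scaleC c y"
    and scaleC_add_left: "scaleC (c + d) x = scaleC c x + scaleC d x"
    and scaleC_scaleC: "scaleC c (scaleC d x) = scaleC (c * d) x"
    and scaleC_one: "scaleC 1 x = x"
    and scaleC_of_real: "scaleC (complex_of_real r) x = scaleR r x"
    and norm_scaleC: "norm (scaleC c x) = cmod c * norm x"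

definition bounded_clinear_op :: "('a::complex_hilbert \<Rightarrow> 'b::complex_hilbert) \<Rightarrow> bool" where
  "bounded_clinear_op T \<longleftrightarrow> bounded_linear T \<and> (\<forall>c x. T (scaleC c x) = scaleC c (T x))"

definition bounded_clinear_on :: "'a::complex_hilbert set \<Rightarrow> ('a \<Rightarrow> 'b::complex_hilbert) \<Rightarrow> bool" where
  "bounded_clinear_on S T \<longleftrightarrow>
     (\<forall>x\<in>S. \<forall>y\<in>S. T (x + y) = T x + T y) \<and>
     (\<forall>c. \<forall>x\<in>S. T (scaleC c x) = scaleC c (T x)) \<and>
     (\<exists>K. \<forall>x\<in>S. norm (T x) \<le> K * norm x)"

definition adj :: "('a::complex_hilbert \<Rightarrow> 'a) \<Rightarrow> ('a \<Rightarrow> 'a)" where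
  "adj T = (THE T'. \<forall>x y. inner (T x) y = inner x (T' y))"

definition positive_op :: "('a::complex_hilbert \<Rightarrow> 'a) \<Rightarrow> bool" where
  "positive_op B \<longleftrightarrow> bounded_clinear_op B \<and> adj B = B \<and> (\<forall>x. 0 \<le> inner (B x) x)"

definition op_sqrt :: "('a::complex_hilbert \<Rightarrow> 'a) \<Rightarrow> ('a \<Rightarrow> 'a)" where
  "op_sqrt A = (THE B. positive_op B \<and> B \<circ> B = A)"

definition defect_op :: "('a::complex_hilbert \<Rightarrow> 'a) \<Rightarrow> ('a \<Rightarrow> 'a)" where
  "defect_op P = op_sqrt (\<lambda>x. x - adj P (P x))"

definition defect_space :: "('a::complex_hilbert \<Rightarrow> 'a) \<Rightarrow> 'a set" where
  "defect_space P = closure (range (defect_op P))"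

definition unitary_op :: "('a::complex_hilbert \<Rightarrow> 'b::complex_hilbert) \<Rightarrow> bool" where
  "unitary_op U \<longleftrightarrow> bounded_clinear_op U \<and> bij U \<and> (\<forall>x. norm (U x) = norm x)"

definition unitary_between :: "'a::complex_hilbert set \<Rightarrow> 'b::complex_hilbert set \<Rightarrow> ('a \<Rightarrow> 'b) \<Rightarrow> bool" where
  "unitary_between S T V \<longleftrightarrow> bounded_clinear_on S V \<and> bij_betw V S T \<and> (\<forall>x\<in>S. norm (V x) = norm x)"

definition Gamma3 :: "(complex \<times> complex \<times> complex) set" where
  "Gamma3 = {(z1 + z2 + z3, z1 * z2 + z2 * z3 + z3 * z1, z1 * z2 * z3) | z1 z2 z3.
              cmod z1 \<le> 1 \<and> cmod z2 \<le> 1 \<and> cmod z3 \<le> 1}"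

definition commuting_triple :: "('a::complex_hilbert \<Rightarrow> 'a) \<Rightarrow> ('a \<Rightarrow> 'a) \<Rightarrow> ('a \<Rightarrow> 'a) \<Rightarrow> bool" where
  "commuting_triple A B C \<longleftrightarrow> bounded_clinear_op A \<and> bounded_clinear_op B \<and> bounded_clinear_op C \<and>
     A \<circ> B = B \<circ> A \<and> B \<circ> C = C \<circ> B \<and> A \<circ> C = C \<circ> A"

text \<open>Koszul complex \<open>0 \<rightarrow> H \<rightarrow> H^3 \<rightarrow> H^3 \<rightarrow> H \<rightarrow> 0\<close> of a commuting triple.\<close>
definition koszul_d1 :: "('a::complex_hilbert \<Rightarrow> 'a) \<Rightarrow> ('a \<Rightarrow> 'a) \<Rightarrow> ('a \<Rightarrow> 'a) \<Rightarrow> 'a \<Rightarrow> 'a \<times> 'a \<times> 'a" where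
  "koszul_d1 A1 A2 A3 x = (A1 x, A2 x, A3 x)"

definition koszul_d2 :: "('a::complex_hilbert \<Rightarrow> 'a) \<Rightarrow> ('a \<Rightarrow> 'a) \<Rightarrow> ('a \<Rightarrow> 'a) \<Rightarrow> 'a \<times> 'a \<times> 'a \<Rightarrow> 'a \<times> 'a \<times> 'a" where
  "koszul_d2 A1 A2 A3 v = (case v of (x1, x2, x3) \<Rightarrow>
      (A2 x3 - A3 x2, A3 x1 - A1 x3, A1 x2 - A2 x1))"

definition koszul_d3 :: "('a::complex_hilbert \<Rightarrow> 'a) \<Rightarrow> ('a \<Rightarrow> 'a) \<Rightarrow> ('a \<Rightarrow> 'a) \<Rightarrow> 'a \<times> 'a \<times> 'a \<Rightarrow> 'a" where
  "koszul_d3 A1 A2 A3 v = (case v of (y1, y2, y3) \<Rightarrow> A1 y1 + A2 y2 + A3 y3)"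

definition koszul_exact :: "('a::complex_hilbert \<Rightarrow> 'a) \<Rightarrow> ('a \<Rightarrow> 'a) \<Rightarrow> ('a \<Rightarrow> 'a) \<Rightarrow> bool" where
  "koszul_exact A1 A2 A3 \<longleftrightarrow>
     (\<forall>x. koszul_d1 A1 A2 A3 x = 0 \<longrightarrow> x = 0) \<and>
     (\<forall>v. koszul_d2 A1 A2 A3 v = 0 \<longrightarrow> v \<in> range (koszul_d1 A1 A2 A3)) \<and>
     (\<forall>v. koszul_d3 A1 A2 A3 v = 0 \<longrightarrow> v \<in> range (koszul_d2 A1 A2 A3)) \<and>
     surj (koszul_d3 A1 A2 A3)"

definition shift_op :: "('a::complex_hilbert \<Rightarrow> 'a) \<Rightarrow> complex \<Rightarrow> ('a \<Rightarrow> 'a)" where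
  "shift_op T c = (\<lambda>x. T x - scaleC c x)"

definition taylor_spectrum ::
  "('a::complex_hilbert \<Rightarrow> 'a) \<Rightarrow> ('a \<Rightarrow> 'a) \<Rightarrow> ('a \<Rightarrow> 'a) \<Rightarrow> (complex \<times> complex \<times> complex) set" where
  "taylor_spectrum A B C = {(a, b, c). \<not> koszul_exact (shift_op A a) (shift_op B b) (shift_op C c)}"

definition poly3_eval :: "nat \<Rightarrow> (nat \<Rightarrow> nat \<Rightarrow> nat \<Rightarrow> complex) \<Rightarrow> complex \<times> complex \<times> complex \<Rightarrow> complex" where
  "poly3_eval N cf z = (case z of (z1, z2, z3) \<Rightarrow>
     (\<Sum>i<N. \<Sum>j<N. \<Sum>k<N. cf i j k * z1 ^ i * z2 ^ j * z3 ^ k))"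

definition poly3_op :: "nat \<Rightarrow> (nat \<Rightarrow> nat \<Rightarrow> nat \<Rightarrow> complex) \<Rightarrow>
    ('a::complex_hilbert \<Rightarrow> 'a) \<Rightarrow> ('a \<Rightarrow> 'a) \<Rightarrow> ('a \<Rightarrow> 'a) \<Rightarrow> ('a \<Rightarrow> 'a)" where
  "poly3_op N cf A B C = (\<lambda>x.
     (\<Sum>i<N. \<Sum>j<N. \<Sum>k<N. scaleC (cf i j k) ((A ^^ i) ((B ^^ j) ((C ^^ k) x)))))"

text \<open>\<open>\<Gamma>_3\<close>-contraction: commuting triple, Taylor spectrum in \<open>\<Gamma>_3\<close>, and for every rational
function \<open>f = p/q\<close> with \<open>q\<close> zero-free on \<open>\<Gamma>_3\<close>, the operator \<open>f(A,B,C) = p(A,B,C) q(A,B,C)^{-1}\<close>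
is defined and has norm at most \<open>sup_{\<Gamma>_3} |f|\<close>.\<close>
definition gamma3_contraction :: "('a::complex_hilbert \<Rightarrow> 'a) \<Rightarrow> ('a \<Rightarrow> 'a) \<Rightarrow> ('a \<Rightarrow> 'a) \<Rightarrow> bool" where
  "gamma3_contraction A B C \<longleftrightarrow>
     commuting_triple A B C \<and> taylor_spectrum A B C \<subseteq> Gamma3 \<and>
     (\<forall>Np cp Nq cq. (\<forall>z\<in>Gamma3. poly3_eval Nq cq z \<noteq> 0) \<longrightarrow>
        (\<exists>R. bounded_clinear_op R \<and>
             R \<circ> poly3_op Nq cq A B C = id \<and> poly3_op Nq cq A B C \<circ> R = id \<and>
             (\<forall>x. norm (poly3_op Np cp A B C (R x)) \<le>
                  Sup ((\<lambda>z. cmod (poly3_eval Np cp z / poly3_eval Nq cq z)) ` Gamma3) * norm x)))"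

text \<open>Operators on \<open>\<D>_P\<close> are represented by maps on the whole space whose
behaviour is only constrained on \<open>\<D>_P\<close>.\<close>
definition fundamental_pair :: "('a::complex_hilbert \<Rightarrow> 'a) \<Rightarrow> ('a \<Rightarrow> 'a) \<Rightarrow> ('a \<Rightarrow> 'a) \<Rightarrow>
    ('a \<Rightarrow> 'a) \<Rightarrow> ('a \<Rightarrow> 'a) \<Rightarrow> bool" where
  "fundamental_pair S1 S2 P F1 F2 \<longleftrightarrow>
     F1 ` defect_space P \<subseteq> defect_space P \<and> F2 ` defect_space P \<subseteq> defect_space P \<and>
     bounded_clinear_on (defect_space P) F1 \<and> bounded_clinear_on (defect_space P) F2 \<and>
     (\<forall>x. S1 x - adj S2 (P x) = defect_op P (F1 (defect_op P x))) \<and>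
     (\<forall>x. S2 x - adj S1 (P x) = defect_op P (F2 (defect_op P x)))"

end

theory Submission
  imports Defs
begin

lemma quad_zero:
  fixes a b :: real
  assumes "\<And>t. 0 \<le> 2 * t * a + t^2 * b"
  shows "a = 0"
proof (rule ccontr)
  assume "a \<noteq> 0"
  define k where "k = \<bar>b\<bar> + 1"
  define t where "t = - a / k"
  have pos: "k > 0" by (simp add: k_def)
  have 1: "0 \<le> 2 * t * a + t^2 * b" by (rule assms)
  have 2: "t^2 * b \<le> t^2 * k"
    by (intro mult_left_mono) (auto simp: k_def)
  have 3: "2 * t * a + t^2 * k = - (a^2) / k"
    using pos unfolding t_def by (simp add: field_simps power2_eq_square)
  have 4: "- (a^2) / k < 0" using \<open>a \<noteq> 0\<close> pos by (simp add: divide_neg_pos)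
  show False using 1 2 3 4 by linarith
qed

lemma inner_ext: fixes a b :: "'a::real_inner"
  assumes "\<And>x. inner x a = inner x b" shows "a = b"
proof -
  have "inner (a - b) (a - b) = 0" using assms[of "a-b"] by (simp add: inner_diff_right)
  thus ?thesis by simp
qed

lemma riesz:
  fixes f :: "'a::{real_inner,complete_space} \<Rightarrow> real"
  assumes bl: "bounded_linear f"
  shows "\<exists>z. \<forall>x. f x = inner x z"
proof (cases "\<forall>x. f x = 0")
  case True thus ?thesis by (intro exI[of _ 0]) simp
next
  case False
  interpret f: bounded_linear f by fact
  from False obtain a where "f a \<noteq> 0" by auto
  define a1 where "a1 = a /\<^sub>R f a"
  have fa1: "f a1 = 1" using \<open>f a \<noteq> 0\<close> by (simp add: a1_def f.scaleR)
  define S where "S = {x. f x = 1}"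
  define d where "d = Inf ((\<lambda>x. (norm x)^2) ` S)"
  have bdd: "bdd_below ((\<lambda>x. (norm x)^2) ` S)" by (rule bdd_belowI[of _ 0]) auto
  have ne: "(\<lambda>x. (norm x)^2) ` S \<noteq> {}" using fa1 by (auto simp: S_def)
  have dle: "d \<le> (norm y)^2" if "y \<in> S" for y
    unfolding d_def by (rule cInf_lower) (use that bdd in auto)
  have ex: "\<forall>n. \<exists>x. x \<in> S \<and> (norm x)^2 < d + 1 / (real n + 1)"
  proof
    fix n
    have "d < d + 1 / (real n + 1)" by simp
    then obtain v where "v \<in> (\<lambda>x. (norm x)^2) ` S" "v < d + 1 / (real n + 1)"
      using cInf_lessD[OF ne] unfolding d_def by blast
    thus "\<exists>x. x \<in> S \<and> (norm x)^2 < d + 1 / (real n + 1)" by auto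
  qed
  obtain X where XS: "\<And>n. X n \<in> S" and Xn: "\<And>n. (norm (X n))^2 < d + 1 / (real n + 1)"
    using choice[OF ex] by blast
  have par: "(norm (X n - X m))^2 \<le> 2 / (real n + 1) + 2 / (real m + 1)" for n m
  proof -
    have "f ((X n + X m) /\<^sub>R 2) = 1" using XS[of n] XS[of m] by (simp add: S_def f.scaleR f.add)
    hence "d \<le> (norm ((X n + X m) /\<^sub>R 2))^2" by (intro dle) (simp add: S_def)
    also have "(norm ((X n + X m) /\<^sub>R 2))^2 = (norm (X n + X m))^2 / 4"
      by (simp add: power2_eq_square)
    finally have 1: "4 * d \<le> (norm (X n + X m))^2" by simp
    have 2: "(norm (X n - X m))^2 + (norm (X n + X m))^2 = 2 * (norm (X n))^2 + 2 * (norm (X m))^2"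
      by (simp add: power2_norm_eq_inner inner_add_left inner_add_right inner_diff_left inner_diff_right inner_commute[of "X m" "X n"])
    show ?thesis using 1 2 Xn[of n] Xn[of m] by linarith
  qed
  have "Cauchy X"
  proof (rule metric_CauchyI)
    fix e :: real assume "e > 0"
    obtain M :: nat where M: "4 / e^2 < real M" using reals_Archimedean2 by blast
    have "\<forall>m\<ge>M. \<forall>n\<ge>M. dist (X m) (X n) < e"
    proof (intro allI impI)
      fix m n assume "m \<ge> M" "n \<ge> M"
      have "2 / (real m + 1) \<le> 2 / (real M + 1)" using \<open>m \<ge> M\<close> by (intro divide_left_mono) auto
      moreover have "2 / (real n + 1) \<le> 2 / (real M + 1)" using \<open>n \<ge> M\<close> by (intro divide_left_mono) auto
      ultimately have "(norm (X m - X n))^2 \<le> 4 / (real M + 1)" using par[of m n] by linarith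
      also have "4 / (real M + 1) < e^2"
      proof -
        have "4 < real M * e^2" using M \<open>e > 0\<close> by (simp add: field_simps)
        also have "\<dots> \<le> (real M + 1) * e^2" by (simp add: algebra_simps)
        finally show ?thesis by (simp add: divide_less_eq add_pos_nonneg mult.commute)
      qed
      finally have "(norm (X m - X n))^2 < e^2" .
      hence "norm (X m - X n) < e" using \<open>e > 0\<close> by (simp add: power_less_imp_less_base)
      thus "dist (X m) (X n) < e" by (simp add: dist_norm)
    qed
    thus "\<exists>M. \<forall>m\<ge>M. \<forall>n\<ge>M. dist (X m) (X n) < e" by blast
  qed
  then obtain z0 where lim: "X \<longlonglongrightarrow> z0" using Cauchy_convergent_iff convergent_def by blast
  have "(\<lambda>n. f (X n)) \<longlonglongrightarrow> f z0" by (rule f.tendsto[OF lim])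
  moreover have "(\<lambda>n. f (X n)) = (\<lambda>n. 1)" using XS by (simp add: S_def)
  ultimately have fz0: "f z0 = 1" by (simp add: LIMSEQ_const_iff)
  have inv0: "(\<lambda>n. 1 / (real n + 1)) \<longlonglongrightarrow> 0"
  proof -
    have "(\<lambda>n. 1 / (real n + 1)) = (\<lambda>n. 1 / real (Suc n))" by (simp add: add.commute)
    thus ?thesis using LIMSEQ_Suc[OF lim_1_over_n] by simp
  qed
  have minz: "(norm z0)^2 \<le> (norm y)^2" if "y \<in> S" for y
  proof -
    have l1: "(\<lambda>n. (norm (X n))^2) \<longlonglongrightarrow> (norm z0)^2"
      by (intro tendsto_intros lim)
    have l2: "(\<lambda>n. (norm y)^2 + 1 / (real n + 1)) \<longlonglongrightarrow> (norm y)^2 + 0"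
      by (intro tendsto_intros inv0)
    have "\<forall>n. (norm (X n))^2 \<le> (norm y)^2 + 1 / (real n + 1)"
    proof
      fix n show "(norm (X n))^2 \<le> (norm y)^2 + 1 / (real n + 1)"
        using Xn[of n] dle[OF that] by linarith
    qed
    thus ?thesis
      by (intro LIMSEQ_le[OF l1 l2[simplified]]) blast
  qed
  have orth: "inner z0 w = 0" if "f w = 0" for w
  proof (rule quad_zero)
    fix t :: real
    have "z0 + t *\<^sub>R w \<in> S" using fz0 that by (simp add: S_def f.add f.scaleR)
    hence "(norm z0)^2 \<le> (norm (z0 + t *\<^sub>R w))^2" by (rule minz)
    also have "(norm (z0 + t *\<^sub>R w))^2 = inner (z0 + t *\<^sub>R w) (z0 + t *\<^sub>R w)"
      by (simp add: power2_norm_eq_inner)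
    also have "\<dots> = inner z0 z0 + t * inner w z0 + t * inner z0 w + t * t * inner w w"
      by (simp add: inner_add_left inner_add_right distrib_left)
    also have "\<dots> = (norm z0)^2 + 2 * t * inner z0 w + t^2 * (norm w)^2"
      by (simp add: inner_commute[of w z0] power2_eq_square flip: power2_norm_eq_inner)
    finally show "0 \<le> 2 * t * inner z0 w + t^2 * (norm w)^2" by simp
  qed
  have z0nz: "z0 \<noteq> 0" using fz0 f.zero by auto
  have "f x = inner x (z0 /\<^sub>R (inner z0 z0))" for x
  proof -
    have "f (x - f x *\<^sub>R z0) = 0" using fz0 by (simp add: f.diff f.scaleR)
    hence "inner z0 (x - f x *\<^sub>R z0) = 0" by (rule orth)
    hence "inner z0 x = f x * inner z0 z0" by (simp add: inner_diff_right)
    thus ?thesis using z0nz by (simp add: inner_commute)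
  qed
  thus ?thesis by blast
qed

lemma bl_add: "bounded_linear f \<Longrightarrow> f (x + y) = f x + f y"
  by (rule linear_add[OF bounded_linear.linear])
lemma bl_diff: "bounded_linear f \<Longrightarrow> f (x - y) = f x - f y"
  by (rule linear_diff[OF bounded_linear.linear])
lemma bl_scale: "bounded_linear f \<Longrightarrow> f (r *\<^sub>R x) = r *\<^sub>R f x"
  by (rule linear_scale[OF bounded_linear.linear])
lemma bl_zero: "bounded_linear f \<Longrightarrow> f 0 = 0"
  by (rule linear_0[OF bounded_linear.linear])
lemma bl_minus: "bounded_linear f \<Longrightarrow> f (- x) = - f x"
  by (rule linear_neg[OF bounded_linear.linear])
lemma bl_sum: "bounded_linear f \<Longrightarrow> f (sum g A) = (\<Sum>a\<in>A. f (g a))"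
  by (rule linear_sum[OF bounded_linear.linear])

lemma scaleC_zero_left[simp]: "scaleC 0 (x::'a::complex_hilbert) = 0"
  using scaleC_of_real[of 0 x] by simp

lemma scaleC_zero_right[simp]: "scaleC c (0::'a::complex_hilbert) = 0"
  using scaleC_add_right[of c 0 0] by simp

lemma scaleC_minus_right: "scaleC c (- x::'a::complex_hilbert) = - scaleC c x"
proof -
  have "scaleC c x + scaleC c (- x) = 0" using scaleC_add_right[of c x "-x"] by simp
  thus ?thesis by (rule minus_unique[symmetric])
qed

lemma scaleC_diff_right: "scaleC c (x - y::'a::complex_hilbert) = scaleC c x - scaleC c y"
  using scaleC_add_right[of c x "-y"] by (simp add: scaleC_minus_right)

lemma scaleC_scaleR_comm: "scaleC c (r *\<^sub>R (x::'a::complex_hilbert)) = r *\<^sub>R scaleC c x"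
proof -
  have "scaleC c (r *\<^sub>R x) = scaleC c (scaleC (complex_of_real r) x)" by (simp add: scaleC_of_real)
  also have "\<dots> = scaleC (complex_of_real r) (scaleC c x)" by (simp add: scaleC_scaleC mult.commute)
  finally show ?thesis by (simp add: scaleC_of_real)
qed

lemma bounded_linear_scaleC: "bounded_linear (scaleC c :: 'a::complex_hilbert \<Rightarrow> 'a)"
proof (rule bounded_linear_intro[where K="cmod c"])
  show "\<And>x y. scaleC c (x + y) = scaleC c x + scaleC c y" by (rule scaleC_add_right)
  show "\<And>r x. scaleC c (r *\<^sub>R x) = r *\<^sub>R scaleC c x" by (rule scaleC_scaleR_comm)
  show "\<And>x. norm (scaleC c x) \<le> norm x * cmod c" by (simp add: norm_scaleC mult.commute)
qed

lemma inner_scaleC_ii: "inner (scaleC \<i> x) (scaleC \<i> (y::'a::complex_hilbert)) = inner x y"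
proof -
  have "scaleC \<i> x + scaleC \<i> y = scaleC \<i> (x + y)" by (simp add: scaleC_add_right)
  thus ?thesis by (simp add: dot_norm[of "scaleC \<i> x"] dot_norm[of x] norm_scaleC)
qed

lemma scaleC_decomp: "scaleC c (x::'a::complex_hilbert) = Re c *\<^sub>R x + Im c *\<^sub>R scaleC \<i> x"
proof -
  have "c = complex_of_real (Re c) + complex_of_real (Im c) * \<i>" by (simp add: complex_eq_iff)
  hence "scaleC c x = scaleC (complex_of_real (Re c)) x + scaleC (complex_of_real (Im c) * \<i>) x"
    by (metis scaleC_add_left)
  also have "scaleC (complex_of_real (Im c) * \<i>) x = Im c *\<^sub>R scaleC \<i> x"
    by (simp add: scaleC_scaleC[symmetric] scaleC_of_real)
  finally show ?thesis by (simp add: scaleC_of_real)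
qed

lemma inner_scaleC_ii_left: "inner (scaleC \<i> x) (y::'a::complex_hilbert) = - inner x (scaleC \<i> y)"
proof -
  have "y = scaleC \<i> (scaleC (-\<i>) y)" by (simp add: scaleC_scaleC scaleC_one)
  hence "inner (scaleC \<i> x) y = inner x (scaleC (-\<i>) y)" by (metis inner_scaleC_ii)
  also have "scaleC (-\<i>) y = - scaleC \<i> y"
    using scaleC_decomp[of "-\<i>" y] scaleC_decomp[of "\<i>" y] by simp
  finally show ?thesis by simp
qed

lemma inner_scaleC_left: "inner (scaleC c x) (y::'a::complex_hilbert) = inner x (scaleC (cnj c) y)"
  by (simp add: scaleC_decomp[of c x] scaleC_decomp[of "cnj c" y] inner_add_left inner_add_right
      inner_scaleC_ii_left inner_diff_right)

lemma inner_scaleC_right: "inner x (scaleC c (y::'a::complex_hilbert)) = inner (scaleC (cnj c) x) y"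
  by (simp add: inner_scaleC_left)

section \<open>Adjoints\<close>

lemma adj_exists:
  fixes T :: "'a::complex_hilbert \<Rightarrow> 'a"
  assumes "bounded_linear T"
  shows "\<exists>T'. \<forall>x y. inner (T x) y = inner x (T' y)"
proof -
  have "\<forall>y. \<exists>z. \<forall>x. inner (T x) y = inner x z"
  proof
    fix y
    have "bounded_linear (\<lambda>x. inner (T x) y)"
      using bounded_linear_compose[OF bounded_linear_inner_left assms] by simp
    thus "\<exists>z. \<forall>x. inner (T x) y = inner x z" by (rule riesz)
  qed
  thus ?thesis using choice by metis
qed

lemma adj_ex1:
  fixes T :: "'a::complex_hilbert \<Rightarrow> 'a"
  assumes "bounded_linear T"
  shows "\<exists>!T'. \<forall>x y. inner (T x) y = inner x (T' y)"
proof -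
  obtain T' where T': "\<forall>x y. inner (T x) y = inner x (T' y)" using adj_exists[OF assms] by blast
  moreover have "T'' = T'" if "\<forall>x y. inner (T x) y = inner x (T'' y)" for T''
  proof
    fix y show "T'' y = T' y" by (rule inner_ext) (use that T' in metis)
  qed
  ultimately show ?thesis by blast
qed

lemma adj_inner:
  fixes T :: "'a::complex_hilbert \<Rightarrow> 'a"
  assumes "bounded_linear T"
  shows "inner (T x) y = inner x (adj T y)"
proof -
  have "\<forall>x y. inner (T x) y = inner x (adj T y)"
    unfolding adj_def by (rule theI'[OF adj_ex1[OF assms]])
  thus ?thesis by blast
qed

lemma adj_inner2:
  fixes T :: "'a::complex_hilbert \<Rightarrow> 'a"
  assumes "bounded_linear T"
  shows "inner (adj T y) x = inner y (T x)"
  using adj_inner[OF assms, of x y] by (simp add: inner_commute)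

lemma adj_eqI:
  fixes T :: "'a::complex_hilbert \<Rightarrow> 'a"
  assumes "bounded_linear T" "\<And>x y. inner (T x) y = inner x (T' y)"
  shows "adj T = T'"
  unfolding adj_def by (rule the1_equality[OF adj_ex1[OF assms(1)]]) (use assms(2) in blast)

lemma adj_norm_bound:
  fixes T :: "'a::complex_hilbert \<Rightarrow> 'a"
  assumes "bounded_linear T" "\<And>x. norm (T x) \<le> K * norm x" "K \<ge> 0"
  shows "norm (adj T y) \<le> K * norm y"
proof (cases "adj T y = 0")
  case True thus ?thesis using assms(3) by simp
next
  case False
  have "(norm (adj T y))^2 = inner (adj T y) (adj T y)" by (simp add: power2_norm_eq_inner)
  also have "\<dots> = inner (T (adj T y)) y" by (simp add: adj_inner[OF assms(1)])
  also have "\<dots> \<le> norm (T (adj T y)) * norm y" by (rule norm_cauchy_schwarz)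
  also have "\<dots> \<le> K * norm (adj T y) * norm y" by (intro mult_right_mono assms(2)) simp
  finally have "norm (adj T y) * norm (adj T y) \<le> (K * norm y) * norm (adj T y)"
    by (simp add: power2_eq_square algebra_simps)
  thus ?thesis using False by simp
qed

lemma adj_bounded_linear:
  fixes T :: "'a::complex_hilbert \<Rightarrow> 'a"
  assumes bl: "bounded_linear T"
  shows "bounded_linear (adj T)"
proof -
  obtain K where K: "\<And>x. norm (T x) \<le> norm x * K" "K \<ge> 0"
    using bounded_linear.nonneg_bounded[OF bl] by blast
  show ?thesis
  proof (rule bounded_linear_intro[where K=K])
    fix y z :: 'a and r :: real
    show "adj T (y + z) = adj T y + adj T z"
      by (rule inner_ext) (simp add: inner_add_right adj_inner[OF bl, symmetric])
    show "adj T (r *\<^sub>R y) = r *\<^sub>R adj T y"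
      by (rule inner_ext) (simp add: adj_inner[OF bl, symmetric])
    show "norm (adj T y) \<le> norm y * K"
      using adj_norm_bound[OF bl, of K y] K by (simp add: mult.commute)
  qed
qed

lemma adj_clinear:
  fixes T :: "'a::complex_hilbert \<Rightarrow> 'a"
  assumes "bounded_clinear_op T"
  shows "bounded_clinear_op (adj T)"
proof -
  have bl: "bounded_linear T" and cl: "\<And>c x. T (scaleC c x) = scaleC c (T x)"
    using assms by (auto simp: bounded_clinear_op_def)
  have "adj T (scaleC c y) = scaleC c (adj T y)" for c y
  proof (rule inner_ext)
    fix x
    have "inner x (adj T (scaleC c y)) = inner (T x) (scaleC c y)" by (simp add: adj_inner[OF bl])
    also have "\<dots> = inner (T (scaleC (cnj c) x)) y" by (simp add: inner_scaleC_right cl)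
    also have "\<dots> = inner (scaleC (cnj c) x) (adj T y)" by (simp add: adj_inner[OF bl])
    also have "\<dots> = inner x (scaleC c (adj T y))" by (simp add: inner_scaleC_left)
    finally show "inner x (adj T (scaleC c y)) = inner x (scaleC c (adj T y))" .
  qed
  thus ?thesis using adj_bounded_linear[OF bl] by (simp add: bounded_clinear_op_def)
qed

section \<open>Unitaries\<close>

lemma unitary_inner:
  assumes "unitary_op (U :: 'a::complex_hilbert \<Rightarrow> 'b::complex_hilbert)"
  shows "inner (U x) (U y) = inner x y"
proof -
  have bl: "bounded_linear U" and n: "\<And>x. norm (U x) = norm x"
    using assms by (auto simp: unitary_op_def bounded_clinear_op_def)
  have "U x + U y = U (x + y)" using bl by (simp add: linear_simps)
  thus ?thesis by (simp add: dot_norm[of "U x"] dot_norm[of x] n)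
qed

lemma unitary_inv:
  assumes "unitary_op (U :: 'a::complex_hilbert \<Rightarrow> 'b::complex_hilbert)"
  shows "unitary_op (inv U)" and "\<And>y. U (inv U y) = y" and "\<And>x. inv U (U x) = x"
proof -
  have bl: "bounded_linear U" and n: "\<And>x. norm (U x) = norm x" and b: "bij U"
    and cl: "\<And>c x. U (scaleC c x) = scaleC c (U x)"
    using assms by (auto simp: unitary_op_def bounded_clinear_op_def)
  show UV: "\<And>y. U (inv U y) = y" using b by (simp add: bij_is_surj surj_f_inv_f)
  show VU: "\<And>x. inv U (U x) = x" using b by (simp add: bij_is_inj)
  have nv: "norm (inv U y) = norm y" for y by (metis n UV)
  have blv': "bounded_linear (inv U)"
  proof (rule bounded_linear_intro[where K=1])
    fix a b :: 'b and r :: real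
    show "inv U (a + b) = inv U a + inv U b"
    proof -
      have "U (inv U a + inv U b) = a + b" using bl by (simp add: bl_add UV)
      hence "inv U (a + b) = inv U (U (inv U a + inv U b))" by simp
      thus ?thesis by (simp only: VU)
    qed
    show "inv U (r *\<^sub>R a) = r *\<^sub>R inv U a"
    proof -
      have "U (r *\<^sub>R inv U a) = r *\<^sub>R a" using bl by (simp add: bl_scale UV)
      hence "inv U (r *\<^sub>R a) = inv U (U (r *\<^sub>R inv U a))" by simp
      thus ?thesis by (simp only: VU)
    qed
    show "norm (inv U a) \<le> norm a * 1" by (simp add: nv)
  qed
  have clv: "inv U (scaleC c y) = scaleC c (inv U y)" for c y
  proof -
    have "U (scaleC c (inv U y)) = scaleC c y" by (simp add: cl UV)
    hence "inv U (scaleC c y) = inv U (U (scaleC c (inv U y)))" by simp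
    thus ?thesis by (simp only: VU)
  qed
  show "unitary_op (inv U)"
    unfolding unitary_op_def bounded_clinear_op_def
    using blv' nv bij_imp_bij_inv[OF b] clv by blast
qed

instance complex_hilbert \<subseteq> banach ..

function cc :: "nat \<Rightarrow> real" where
  "cc n = (if n = 0 then 0 else if n = 1 then 1/2 else (\<Sum>k\<in>{1..<n}. cc k * cc (n - k)) / 2)"
  by auto
termination by (relation "Wellfounded.measure id") auto

declare cc.simps[simp del]

lemma cc_0[simp]: "cc 0 = 0" by (simp add: cc.simps)
lemma cc_1[simp]: "cc 1 = 1/2" by (simp add: cc.simps)
lemma cc_Suc0[simp]: "cc (Suc 0) = 1/2" by (simp add: cc.simps)
lemma cc_ge2: "n \<ge> 2 \<Longrightarrow> cc n = (\<Sum>k\<in>{1..<n}. cc k * cc (n - k)) / 2"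
  by (subst cc.simps) simp

lemma cc_nonneg: "cc n \<ge> 0"
proof (induction n rule: less_induct)
  case (less n)
  show ?case
  proof (cases "n \<ge> 2")
    case True
    have "(\<Sum>k\<in>{1..<n}. cc k * cc (n - k)) \<ge> 0"
      by (intro sum_nonneg) (use less in \<open>auto intro!: mult_nonneg_nonneg\<close>)
    thus ?thesis using True by (simp add: cc_ge2)
  next
    case False
    hence "n = 0 \<or> n = 1" by auto
    thus ?thesis by auto
  qed
qed

definition conv :: "nat \<Rightarrow> real" where "conv k = (\<Sum>n\<le>k. cc n * cc (k - n))"

lemma conv_eq: "conv k = 2 * cc k - (if k = 1 then 1 else 0)"
proof (cases "k \<ge> 2")
  case True
  have "conv k = (\<Sum>n\<in>{1..<k}. cc n * cc (k - n))"
    unfolding conv_def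
  proof (rule sum.mono_neutral_right)
    show "\<forall>i\<in>{..k} - {1..<k}. cc i * cc (k - i) = 0"
    proof
      fix i assume "i \<in> {..k} - {1..<k}"
      hence "i = 0 \<or> i = k" by auto
      thus "cc i * cc (k - i) = 0" by auto
    qed
  qed auto
  thus ?thesis using True cc_ge2[OF True] by simp
next
  case False
  hence "k = 0 \<or> k = 1" by auto
  thus ?thesis by (auto simp: conv_def)
qed

definition antidiag :: "nat \<Rightarrow> (nat \<times> nat) set" where "antidiag L = {(n, m). n + m < L}"

lemma antidiag_sub: "antidiag L \<subseteq> {..<L} \<times> {..<L}" by (auto simp: antidiag_def)
lemma finite_antidiag[simp]: "finite (antidiag L)"
  by (rule finite_subset[OF antidiag_sub]) simp

lemma sum_antidiag:
  "(\<Sum>p\<in>antidiag L. g (fst p) (snd p)) = (\<Sum>k<L. \<Sum>n\<le>k. g n (k - n))"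
proof (induction L)
  case 0 thus ?case by (simp add: antidiag_def)
next
  case (Suc L)
  have eq: "antidiag (Suc L) = antidiag L \<union> (\<lambda>n. (n, L - n)) ` {..L}"
    by (auto simp: antidiag_def image_iff)
  have disj: "antidiag L \<inter> (\<lambda>n. (n, L - n)) ` {..L} = {}" by (auto simp: antidiag_def)
  have inj: "inj_on (\<lambda>n. (n, L - n)) {..L}" by (auto simp: inj_on_def)
  have "(\<Sum>p\<in>antidiag (Suc L). g (fst p) (snd p)) =
        (\<Sum>p\<in>antidiag L. g (fst p) (snd p)) + (\<Sum>p\<in>(\<lambda>n. (n, L - n)) ` {..L}. g (fst p) (snd p))"
    unfolding eq by (rule sum.union_disjoint) (use disj in auto)
  also have "(\<Sum>p\<in>(\<lambda>n. (n, L - n)) ` {..L}. g (fst p) (snd p)) = (\<Sum>n\<le>L. g n (L - n))"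
    by (subst sum.reindex[OF inj]) simp
  finally show ?case using Suc by simp
qed

lemma sum_box: "(\<Sum>p\<in>{..<N} \<times> {..<N}. cc (fst p) * cc (snd p)) = (\<Sum>k<N. cc k)^2"
  by (simp add: power2_eq_square sum_product sum.cartesian_product case_prod_beta)

lemma sum_antidiag_conv: "(\<Sum>p\<in>antidiag L. cc (fst p) * cc (snd p)) = (\<Sum>k<L. conv k)"
  using sum_antidiag[of "\<lambda>n m. cc n * cc m" L] by (simp add: conv_def)

lemma sum_conv: "(\<Sum>k<L. conv k) = 2 * (\<Sum>k<L. cc k) - (if L \<ge> 2 then 1 else 0)"
proof (induction L)
  case 0 thus ?case by simp
next
  case (Suc L) thus ?case by (auto simp: conv_eq sum_distrib_left)
qed

lemma partial_le_1: "(\<Sum>k<N. cc k) \<le> 1"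
proof (induction N rule: less_induct)
  case (less N)
  show ?case
  proof (cases "N \<ge> 2")
    case False
    hence "N = 0 \<or> N = 1" by auto
    thus ?thesis by auto
  next
    case True
    define M where "M = N - 1"
    have MN: "M < N" using True by (simp add: M_def)
    define A where "A = antidiag N \<inter> {p. 0 < fst p \<and> 0 < snd p}"
    have "(\<Sum>p\<in>antidiag N. cc (fst p) * cc (snd p)) = (\<Sum>p\<in>A. cc (fst p) * cc (snd p))"
      unfolding A_def by (rule sum.mono_neutral_right) (auto, (metis cc_0 gr0I)+)
    also have "\<dots> \<le> (\<Sum>p\<in>{..<M} \<times> {..<M}. cc (fst p) * cc (snd p))"
      by (rule sum_mono2) (auto simp: A_def antidiag_def M_def cc_nonneg)
    also have "\<dots> = (\<Sum>k<M. cc k)^2" by (rule sum_box)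
    also have "\<dots> \<le> 1"
      using less[OF MN] sum_nonneg[of "{..<M}" cc] cc_nonneg by (simp add: power_le_one)
    finally have "2 * (\<Sum>k<N. cc k) - 1 \<le> 1"
      using sum_antidiag_conv[of N] sum_conv[of N] True by simp
    thus ?thesis by simp
  qed
qed

lemma summable_cc: "summable cc"
  by (rule summableI_nonneg_bounded[where x=1]) (auto simp: cc_nonneg partial_le_1)

lemma suminf_cc_le: "suminf cc \<le> 1"
  by (rule suminf_le_const[OF summable_cc]) (simp add: partial_le_1)

lemma partial_tendsto: "(\<lambda>N. \<Sum>k<N. cc k) \<longlonglongrightarrow> suminf cc"
  using summable_cc by (simp add: summable_LIMSEQ)

lemma tail_bound:
  assumes "N \<ge> 2"
  shows "(\<Sum>p\<in>{..<N} \<times> {..<N} - antidiag N. cc (fst p) * cc (snd p))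
          \<le> 2 * ((\<Sum>k<2*N. cc k) - (\<Sum>k<N. cc k))"
proof -
  have sub1: "{..<N} \<times> {..<N} - antidiag N \<subseteq> antidiag (2*N) - antidiag N"
    by (auto simp: antidiag_def)
  have sub2: "antidiag N \<subseteq> antidiag (2*N)" by (auto simp: antidiag_def)
  have "(\<Sum>p\<in>{..<N} \<times> {..<N} - antidiag N. cc (fst p) * cc (snd p))
        \<le> (\<Sum>p\<in>antidiag (2*N) - antidiag N. cc (fst p) * cc (snd p))"
    by (rule sum_mono2[OF _ sub1]) (auto simp: cc_nonneg)
  also have "\<dots> = (\<Sum>p\<in>antidiag (2*N). cc (fst p) * cc (snd p)) - (\<Sum>p\<in>antidiag N. cc (fst p) * cc (snd p))"
    by (rule sum_diff[OF _ sub2]) simp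
  also have "\<dots> = 2 * ((\<Sum>k<2*N. cc k) - (\<Sum>k<N. cc k))"
    using assms by (simp add: sum_antidiag_conv sum_conv)
  finally show ?thesis .
qed

lemma tail_tendsto: "(\<lambda>N. 2 * ((\<Sum>k<2*N. cc k) - (\<Sum>k<N. cc k))) \<longlonglongrightarrow> 0"
proof -
  have "strict_mono (\<lambda>n::nat. 2 * n)" by (simp add: strict_mono_def)
  hence "(\<lambda>N. \<Sum>k<2*N. cc k) \<longlonglongrightarrow> suminf cc"
    using LIMSEQ_subseq_LIMSEQ[OF partial_tendsto] by (simp add: o_def)
  hence "(\<lambda>N. 2 * ((\<Sum>k<2*N. cc k) - (\<Sum>k<N. cc k))) \<longlonglongrightarrow> 2 * (suminf cc - suminf cc)"
    by (intro tendsto_intros partial_tendsto)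
  thus ?thesis by simp
qed

lemma pos_zero:
  fixes B :: "'a::complex_hilbert \<Rightarrow> 'a"
  assumes bl: "bounded_linear B" and sym: "\<And>x y. inner (B x) y = inner x (B y)"
    and pos: "\<And>x. inner (B x) x \<ge> 0" and z: "inner (B y) y = 0"
  shows "B y = 0"
proof -
  have "inner (B y) z = 0" for z
  proof (rule quad_zero)
    fix t :: real
    have "0 \<le> inner (B (y + t *\<^sub>R z)) (y + t *\<^sub>R z)" by (rule pos)
    also have "\<dots> = inner (B y) y + t * inner (B y) z + t * inner (B z) y + t * t * inner (B z) z"
      by (simp add: bl_add[OF bl] bl_scale[OF bl] inner_add_left inner_add_right distrib_left)
    also have "inner (B z) y = inner (B y) z" by (metis sym inner_commute)
    finally show "0 \<le> 2 * t * inner (B y) z + t^2 * inner (B z) z"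
      using z by (simp add: power2_eq_square algebra_simps)
  qed
  from this[of "B y"] show ?thesis by simp
qed

locale sqrt_setup =
  fixes C :: "'a::complex_hilbert \<Rightarrow> 'a"
  assumes Ccl: "bounded_clinear_op C"
    and Csym: "\<And>x y. inner (C x) y = inner x (C y)"
    and Cnorm: "\<And>x. norm (C x) \<le> norm x"
begin

lemma Cbl: "bounded_linear C" using Ccl by (simp add: bounded_clinear_op_def)
lemma CscaleC: "C (scaleC c x) = scaleC c (C x)" using Ccl by (simp add: bounded_clinear_op_def)

lemma Cp_bl: "bounded_linear (C ^^ n)"
  by (induction n) (auto simp: bounded_linear_ident[unfolded id_def] intro: bounded_linear_compose[OF Cbl])

lemma Cp_cl: "(C ^^ n) (scaleC c x) = scaleC c ((C ^^ n) x)"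
  by (induction n) (auto simp: CscaleC)

lemma Cp_norm: "norm ((C ^^ n) x) \<le> norm x"
  by (induction n) (auto intro: order_trans[OF Cnorm])

lemma Cp_sym: "inner ((C ^^ n) x) y = inner x ((C ^^ n) y)"
  by (induction n arbitrary: x y) (auto simp: Csym funpow_swap1)

lemma Cp_add: "(C ^^ n) ((C ^^ m) x) = (C ^^ (n + m)) x"
  by (simp add: funpow_add)

lemma Cp_comm:
  assumes "\<And>x. B (C x) = C (B x)"
  shows "B ((C ^^ n) x) = (C ^^ n) (B x)"
  by (induction n) (auto simp: assms)

definition tm :: "'a \<Rightarrow> nat \<Rightarrow> 'a" where "tm x n = cc n *\<^sub>R (C ^^ n) x"

lemma norm_tm: "norm (tm x n) \<le> cc n * norm x"
  by (simp add: tm_def cc_nonneg mult_left_mono Cp_norm)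

lemma summable_tm: "summable (tm x)"
proof -
  have "summable (\<lambda>n. cc n * norm x)" by (intro summable_mult2 summable_cc)
  hence "summable (\<lambda>n. norm (tm x n))"
    by (rule summable_comparison_test') (simp add: norm_tm)
  thus ?thesis by (rule summable_norm_cancel)
qed

definition ff :: "'a \<Rightarrow> 'a" where "ff x = suminf (tm x)"

lemma ff_norm: "norm (ff x) \<le> norm x"
proof -
  have "norm (ff x) \<le> (\<Sum>n. cc n * norm x)"
    unfolding ff_def by (rule norm_suminf_le[OF norm_tm]) (intro summable_mult2 summable_cc)
  also have "\<dots> = suminf cc * norm x" by (rule suminf_mult2[symmetric, OF summable_cc])
  also have "\<dots> \<le> 1 * norm x" by (intro mult_right_mono suminf_cc_le) simp
  finally show ?thesis by simp
qed

lemma ff_comm: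
  assumes bl: "bounded_linear B" and c: "\<And>x. B (C x) = C (B x)"
  shows "B (ff x) = ff (B x)"
proof -
  have "B (ff x) = (\<Sum>n. B (tm x n))" unfolding ff_def by (rule bounded_linear.suminf[OF bl summable_tm])
  also have "(\<lambda>n. B (tm x n)) = tm (B x)"
    by (rule ext) (simp add: tm_def bl_scale[OF bl] Cp_comm[where B=B, OF c])
  finally show ?thesis by (simp add: ff_def)
qed

lemma tm_add: "tm (x + y) n = tm x n + tm y n"
  by (simp add: tm_def bl_add[OF Cp_bl] scaleR_add_right)

lemma tm_scale: "tm (r *\<^sub>R x) n = r *\<^sub>R tm x n"
  by (simp add: tm_def bl_scale[OF Cp_bl])

lemma ff_bl: "bounded_linear ff"
proof (rule bounded_linear_intro[where K=1])
  fix x y :: 'a and r :: real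
  show "ff (x + y) = ff x + ff y"
    unfolding ff_def tm_add by (rule suminf_add[OF summable_tm summable_tm, symmetric])
  show "ff (r *\<^sub>R x) = r *\<^sub>R ff x"
    unfolding ff_def tm_scale by (rule suminf_scaleR_right[OF summable_tm, symmetric])
  show "norm (ff x) \<le> norm x * 1" using ff_norm by simp
qed

lemma ff_cl: "ff (scaleC c x) = scaleC c (ff x)"
proof -
  have "scaleC c (ff x) = ff (scaleC c x)"
    by (rule ff_comm[OF bounded_linear_scaleC]) (simp add: CscaleC)
  thus ?thesis by simp
qed

lemma ff_sym: "inner (ff x) y = inner x (ff y)"
proof -
  have "inner (ff x) y = (\<Sum>n. inner (tm x n) y)"
    unfolding ff_def by (rule bounded_linear.suminf[OF bounded_linear_inner_left summable_tm])
  also have "\<dots> = (\<Sum>n. inner x (tm y n))"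
    by (simp add: tm_def Cp_sym)
  also have "\<dots> = inner x (ff y)"
    unfolding ff_def by (rule bounded_linear.suminf[OF bounded_linear_inner_right summable_tm, symmetric])
  finally show ?thesis .
qed

definition fF :: "nat \<Rightarrow> 'a \<Rightarrow> 'a" where "fF N x = (\<Sum>n<N. tm x n)"

lemma fF_tendsto: "(\<lambda>N. fF N x) \<longlonglongrightarrow> ff x"
  unfolding fF_def ff_def by (rule summable_LIMSEQ[OF summable_tm])

lemma fF_diff: "fF N (x - y) = fF N x - fF N y"
  by (simp add: fF_def tm_def bl_diff[OF Cp_bl] scaleR_diff_right sum_subtractf)

lemma fF_norm: "norm (fF N x) \<le> norm x"
proof -
  have "norm (fF N x) \<le> (\<Sum>n<N. cc n * norm x)"
    unfolding fF_def by (rule order_trans[OF norm_sum]) (intro sum_mono norm_tm)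
  also have "\<dots> = (\<Sum>n<N. cc n) * norm x" by (simp add: sum_distrib_right)
  also have "\<dots> \<le> 1 * norm x" by (intro mult_right_mono partial_le_1) simp
  finally show ?thesis by simp
qed

lemma fF_fF: "fF N (fF N x) = (\<Sum>p\<in>{..<N} \<times> {..<N}. (cc (fst p) * cc (snd p)) *\<^sub>R (C ^^ (fst p + snd p)) x)"
proof -
  have "fF N (fF N x) = (\<Sum>n<N. \<Sum>m<N. (cc n * cc m) *\<^sub>R (C ^^ (n + m)) x)"
    by (simp add: fF_def tm_def bl_sum[OF Cp_bl] bl_scale[OF Cp_bl] Cp_add scaleR_sum_right)
  also have "\<dots> = (\<Sum>p\<in>{..<N} \<times> {..<N}. (cc (fst p) * cc (snd p)) *\<^sub>R (C ^^ (fst p + snd p)) x)"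
    by (simp add: sum.cartesian_product case_prod_beta)
  finally show ?thesis .
qed

lemma antidiag_part:
  "(\<Sum>p\<in>antidiag N. (cc (fst p) * cc (snd p)) *\<^sub>R (C ^^ (fst p + snd p)) x)
     = (\<Sum>k<N. conv k *\<^sub>R (C ^^ k) x)"
proof -
  have "(\<Sum>p\<in>antidiag N. (cc (fst p) * cc (snd p)) *\<^sub>R (C ^^ (fst p + snd p)) x)
     = (\<Sum>k<N. \<Sum>n\<le>k. (cc n * cc (k - n)) *\<^sub>R (C ^^ (n + (k - n))) x)"
    using sum_antidiag[of "\<lambda>n m. (cc n * cc m) *\<^sub>R (C ^^ (n + m)) x" N] by simp
  also have "\<dots> = (\<Sum>k<N. conv k *\<^sub>R (C ^^ k) x)"
    by (intro sum.cong refl) (simp add: conv_def scaleR_sum_left)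
  finally show ?thesis .
qed

lemma conv_sum: "(\<Sum>k<N. conv k *\<^sub>R (C ^^ k) x) = 2 *\<^sub>R fF N x - (if N \<ge> 2 then C x else 0)"
proof (induction N)
  case 0 thus ?case by (simp add: fF_def)
next
  case (Suc N)
  show ?case
    using Suc by (auto simp: fF_def tm_def conv_eq scaleR_diff_left scaleR_add_right algebra_simps)
qed

definition EE :: "nat \<Rightarrow> 'a \<Rightarrow> 'a" where
  "EE N x = (\<Sum>p\<in>{..<N} \<times> {..<N} - antidiag N. (cc (fst p) * cc (snd p)) *\<^sub>R (C ^^ (fst p + snd p)) x)"

lemma fF_fF_split: "N \<ge> 2 \<Longrightarrow> fF N (fF N x) = 2 *\<^sub>R fF N x - C x + EE N x"
proof -
  assume N: "N \<ge> 2"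
  have "fF N (fF N x) = EE N x + (\<Sum>p\<in>antidiag N. (cc (fst p) * cc (snd p)) *\<^sub>R (C ^^ (fst p + snd p)) x)"
    unfolding fF_fF EE_def by (rule sum.subset_diff[OF antidiag_sub]) simp
  thus ?thesis using N by (simp add: antidiag_part conv_sum)
qed

lemma EE_norm: "N \<ge> 2 \<Longrightarrow> norm (EE N x) \<le> 2 * ((\<Sum>k<2*N. cc k) - (\<Sum>k<N. cc k)) * norm x"
proof -
  assume N: "N \<ge> 2"
  have "norm (EE N x) \<le> (\<Sum>p\<in>{..<N} \<times> {..<N} - antidiag N. (cc (fst p) * cc (snd p)) * norm x)"
    unfolding EE_def
    by (rule order_trans[OF norm_sum], intro sum_mono)
       (simp add: cc_nonneg mult_left_mono Cp_norm)
  also have "\<dots> = (\<Sum>p\<in>{..<N} \<times> {..<N} - antidiag N. cc (fst p) * cc (snd p)) * norm x"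
    by (simp add: sum_distrib_right)
  also have "\<dots> \<le> 2 * ((\<Sum>k<2*N. cc k) - (\<Sum>k<N. cc k)) * norm x"
    by (intro mult_right_mono tail_bound N) simp
  finally show ?thesis .
qed

lemma ff_ff: "ff (ff x) = 2 *\<^sub>R ff x - C x"
proof -
  have l1: "(\<lambda>N. fF N (fF N x)) \<longlonglongrightarrow> ff (ff x)"
  proof -
    have a: "(\<lambda>N. fF N (fF N x - ff x)) \<longlonglongrightarrow> 0"
    proof (rule Lim_null_comparison)
      show "\<forall>\<^sub>F N in sequentially. norm (fF N (fF N x - ff x)) \<le> norm (fF N x - ff x)"
        by (simp add: fF_norm)
      have "(\<lambda>N. fF N x - ff x) \<longlonglongrightarrow> 0"
        using fF_tendsto[of x] by (simp add: LIM_zero)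
      thus "(\<lambda>N. norm (fF N x - ff x)) \<longlonglongrightarrow> 0" by (rule tendsto_norm_zero)
    qed
    have "(\<lambda>N. fF N (fF N x - ff x) + fF N (ff x)) \<longlonglongrightarrow> 0 + ff (ff x)"
      by (intro tendsto_add a fF_tendsto)
    thus ?thesis by (simp add: fF_diff)
  qed
  have l2: "(\<lambda>N. 2 *\<^sub>R fF N x - C x + EE N x) \<longlonglongrightarrow> 2 *\<^sub>R ff x - C x + 0"
  proof (intro tendsto_intros fF_tendsto)
    show "(\<lambda>N. EE N x) \<longlonglongrightarrow> 0"
    proof (rule Lim_null_comparison)
      show "\<forall>\<^sub>F N in sequentially. norm (EE N x) \<le> 2 * ((\<Sum>k<2*N. cc k) - (\<Sum>k<N. cc k)) * norm x"
        using eventually_ge_at_top[of 2] by eventually_elim (rule EE_norm)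
      show "(\<lambda>N. 2 * ((\<Sum>k<2*N. cc k) - (\<Sum>k<N. cc k)) * norm x) \<longlonglongrightarrow> 0"
        using tendsto_mult_left_zero[OF tail_tendsto, of "norm x"] by simp
    qed
  qed
  have l3: "(\<lambda>N. fF N (fF N x)) \<longlonglongrightarrow> 2 *\<^sub>R ff x - C x"
  proof (rule Lim_transform_eventually[OF l2[simplified]])
    show "\<forall>\<^sub>F N in sequentially. 2 *\<^sub>R fF N x - C x + EE N x = fF N (fF N x)"
      using eventually_ge_at_top[of 2] by eventually_elim (simp add: fF_fF_split)
  qed
  show ?thesis using LIMSEQ_unique[OF l1 l3] .
qed

definition B0 :: "'a \<Rightarrow> 'a" where "B0 x = x - ff x"

lemma B0_bl: "bounded_linear B0"
  unfolding B0_def[abs_def] by (intro bounded_linear_sub bounded_linear_ident ff_bl)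

lemma B0_sym: "inner (B0 x) y = inner x (B0 y)"
  by (simp add: B0_def inner_diff_left inner_diff_right ff_sym)

lemma B0_pos: "inner (B0 x) x \<ge> 0"
proof -
  have "inner (ff x) x \<le> norm (ff x) * norm x" by (rule norm_cauchy_schwarz)
  also have "\<dots> \<le> norm x * norm x" by (intro mult_right_mono ff_norm) simp
  finally show ?thesis by (simp add: B0_def inner_diff_left power2_eq_square[symmetric] power2_norm_eq_inner)
qed

lemma B0_positive: "positive_op B0"
proof -
  have "B0 (scaleC c x) = scaleC c (B0 x)" for c x by (simp add: B0_def ff_cl scaleC_diff_right)
  moreover have "adj B0 = B0" by (rule adj_eqI[OF B0_bl]) (rule B0_sym)
  ultimately show ?thesis using B0_bl B0_pos by (simp add: positive_op_def bounded_clinear_op_def)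
qed

lemma B0_sq: "B0 \<circ> B0 = (\<lambda>x. x - C x)"
proof
  fix x
  have e: "ff (x - ff x) = ff x - (2 *\<^sub>R ff x - C x)" by (simp add: bl_diff[OF ff_bl] ff_ff)
  show "(B0 \<circ> B0) x = x - C x" unfolding comp_def B0_def e by (simp add: scaleR_2 algebra_simps)
qed

lemma sqrt_unique:
  assumes pB: "positive_op B" and sq: "B \<circ> B = (\<lambda>x. x - C x)"
  shows "B = B0"
proof -
  have bl: "bounded_linear B" using pB by (simp add: positive_op_def bounded_clinear_op_def)
  have sym: "inner (B x) y = inner x (B y)" for x y
    using adj_inner[OF bl, of x y] pB by (simp add: positive_op_def)
  have pos: "inner (B x) x \<ge> 0" for x using pB by (simp add: positive_op_def)
  have BB: "B (B x) = x - C x" for x using fun_cong[OF sq, of x] by simp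
  have BC: "B (C x) = C (B x)" for x
  proof -
    have "C x = x - B (B x)" using BB[of x] by simp
    hence "B (C x) = B x - B (B (B x))" by (simp add: bl_diff[OF bl])
    also have "\<dots> = C (B x)" using BB[of "B x"] by simp
    finally show ?thesis .
  qed
  have BB0: "B (B0 x) = B0 (B x)" for x
    by (simp add: B0_def bl_diff[OF bl] ff_comm[OF bl BC])
  have B0B0: "B0 (B0 x) = x - C x" for x using fun_cong[OF B0_sq, of x] by simp
  define T where "T x = B x - B0 x" for x
  have Tbl: "bounded_linear T" unfolding T_def[abs_def] by (intro bounded_linear_sub bl B0_bl)
  have Tsym: "inner (T x) y = inner x (T y)" for x y
    by (simp add: T_def inner_diff_left inner_diff_right sym B0_sym)
  have sum0: "B (T x) + B0 (T x) = 0" for x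
    by (simp add: T_def bl_diff[OF bl] bl_diff[OF B0_bl] BB BB0 B0B0)
  have "T x = 0" for x
  proof -
    have "inner (B (T x)) (T x) + inner (B0 (T x)) (T x) = 0"
      using sum0[of x] by (simp add: inner_add_left[symmetric])
    hence z1: "inner (B (T x)) (T x) = 0" and z2: "inner (B0 (T x)) (T x) = 0"
      using pos[of "T x"] B0_pos[of "T x"] by linarith+
    have "B (T x) = 0" by (rule pos_zero[OF bl sym pos z1])
    moreover have "B0 (T x) = 0" by (rule pos_zero[OF B0_bl B0_sym B0_pos z2])
    ultimately have "T (T x) = 0" by (simp add: T_def)
    hence "inner (T x) (T x) = 0" by (simp add: Tsym)
    thus ?thesis by simp
  qed
  thus ?thesis by (auto simp: T_def)
qed

lemma sqrt_ex1: "\<exists>!B. positive_op B \<and> B \<circ> B = (\<lambda>x. x - C x)"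
  using B0_positive B0_sq sqrt_unique by blast

lemma op_sqrt_eq: "op_sqrt (\<lambda>x. x - C x) = B0"
  unfolding op_sqrt_def by (rule the1_equality[OF sqrt_ex1]) (simp add: B0_positive B0_sq)

end

lemma gamma3_contr:
  assumes "gamma3_contraction A B P"
  shows "norm (P x) \<le> norm x"
proof -
  define cp :: "nat \<Rightarrow> nat \<Rightarrow> nat \<Rightarrow> complex" where
    "cp = (\<lambda>i j k. if i = 0 \<and> j = 0 \<and> k = 1 then 1 else 0)"
  define cq :: "nat \<Rightarrow> nat \<Rightarrow> nat \<Rightarrow> complex" where "cq = (\<lambda>i j k. 1)"
  have q1: "poly3_eval 1 cq z = 1" for z by (cases z) (simp add: poly3_eval_def cq_def)
  have q1': "poly3_eval (Suc 0) cq z = 1" for z using q1[of z] by simp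
  have p3: "poly3_eval 2 cp z = snd (snd z)" for z
    by (cases z) (simp add: poly3_eval_def cp_def numeral_2_eq_2 lessThan_Suc)
  have h: "\<forall>z\<in>Gamma3. poly3_eval 1 cq z \<noteq> 0" unfolding q1 by simp
  have "\<exists>R. bounded_clinear_op R \<and>
             R \<circ> poly3_op 1 cq A B P = id \<and> poly3_op 1 cq A B P \<circ> R = id \<and>
             (\<forall>x. norm (poly3_op 2 cp A B P (R x)) \<le>
                  Sup ((\<lambda>z. cmod (poly3_eval 2 cp z / poly3_eval 1 cq z)) ` Gamma3) * norm x)"
    using assms h unfolding gamma3_contraction_def by blast
  then obtain R where R: "R \<circ> poly3_op 1 cq A B P = id"
    and bnd: "\<And>x. norm (poly3_op 2 cp A B P (R x)) \<le>
          Sup ((\<lambda>z. cmod (poly3_eval 2 cp z / poly3_eval 1 cq z)) ` Gamma3) * norm x"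
    by blast
  have "poly3_op 1 cq A B P = id" by (rule ext) (simp add: poly3_op_def cq_def scaleC_one)
  hence Rid: "R x = x" for x using R by (simp add: fun_eq_iff)
  have pP: "poly3_op 2 cp A B P y = P y" for y
    by (simp add: poly3_op_def cp_def numeral_2_eq_2 lessThan_Suc scaleC_one)
  have "Sup ((\<lambda>z. cmod (poly3_eval 2 cp z / poly3_eval 1 cq z)) ` Gamma3) \<le> 1"
  proof (rule cSup_least)
    show "(\<lambda>z. cmod (poly3_eval 2 cp z / poly3_eval 1 cq z)) ` Gamma3 \<noteq> {}"
      unfolding Gamma3_def by (auto intro!: exI[of _ 0])
    fix v assume "v \<in> (\<lambda>z. cmod (poly3_eval 2 cp z / poly3_eval 1 cq z)) ` Gamma3"
    then obtain z1 z2 z3 where v: "v = cmod (z1 * z2 * z3)" and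
      h: "cmod z1 \<le> 1" "cmod z2 \<le> 1" "cmod z3 \<le> 1"
      unfolding Gamma3_def by (auto simp: q1 q1' p3)
    have "cmod (z1 * z2 * z3) = cmod z1 * cmod z2 * cmod z3" by (simp add: norm_mult)
    also have "\<dots> \<le> 1 * 1 * 1" using h by (intro mult_mono) auto
    finally show "v \<le> 1" using v by simp
  qed
  hence "Sup ((\<lambda>z. cmod (poly3_eval 2 cp z / poly3_eval 1 cq z)) ` Gamma3) * norm x \<le> 1 * norm x"
    by (intro mult_right_mono) simp_all
  thus ?thesis using bnd[of x] by (simp add: Rid pP)
qed

lemma defect_facts:
  fixes P :: "'a::complex_hilbert \<Rightarrow> 'a"
  assumes Pcl: "bounded_clinear_op P" and Pn: "\<And>x. norm (P x) \<le> norm x"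
  shows "positive_op (defect_op P)"
    and "defect_op P \<circ> defect_op P = (\<lambda>x. x - adj P (P x))"
    and "\<And>B. positive_op B \<Longrightarrow> B \<circ> B = (\<lambda>x. x - adj P (P x)) \<Longrightarrow> B = defect_op P"
proof -
  have Pbl: "bounded_linear P" using Pcl by (simp add: bounded_clinear_op_def)
  have Acl: "bounded_clinear_op (adj P)" by (rule adj_clinear[OF Pcl])
  have Abl: "bounded_linear (adj P)" by (rule adj_bounded_linear[OF Pbl])
  interpret S: sqrt_setup "\<lambda>x. adj P (P x)"
  proof
    show "bounded_clinear_op (\<lambda>x. adj P (P x))"
      using Acl Pcl bounded_linear_compose[OF Abl Pbl] by (simp add: bounded_clinear_op_def)
    show "inner (adj P (P x)) y = inner x (adj P (P y))" for x y
      by (simp add: adj_inner2[OF Pbl] adj_inner[OF Pbl])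
    show "norm (adj P (P x)) \<le> norm x" for x
    proof -
      have "norm (adj P (P x)) \<le> 1 * norm (P x)" by (rule adj_norm_bound[OF Pbl]) (simp_all add: Pn)
      thus ?thesis using Pn[of x] by linarith
    qed
  qed
  have eq: "defect_op P = S.B0" unfolding defect_op_def by (rule S.op_sqrt_eq)
  show "positive_op (defect_op P)" using S.B0_positive eq by simp
  show "defect_op P \<circ> defect_op P = (\<lambda>x. x - adj P (P x))" using S.B0_sq eq by simp
  show "\<And>B. positive_op B \<Longrightarrow> B \<circ> B = (\<lambda>x. x - adj P (P x)) \<Longrightarrow> B = defect_op P"
    using S.sqrt_unique eq by simp
qed

lemma closure_diff_range:
  assumes bl: "bounded_linear D" and a: "a \<in> closure (range D)" and b: "b \<in> closure (range D)"
  shows "a - b \<in> closure (range D)"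
proof -
  obtain xa where xa: "\<And>n. xa n \<in> range D" "xa \<longlonglongrightarrow> a" using a unfolding closure_sequential by blast
  obtain xb where xb: "\<And>n. xb n \<in> range D" "xb \<longlonglongrightarrow> b" using b unfolding closure_sequential by blast
  have "\<forall>n. xa n - xb n \<in> range D"
  proof
    fix n
    obtain u v where "xa n = D u" "xb n = D v" using xa(1)[of n] xb(1)[of n] by blast
    hence "xa n - xb n = D (u - v)" by (simp add: bl_diff[OF bl])
    thus "xa n - xb n \<in> range D" by simp
  qed
  moreover have "(\<lambda>n. xa n - xb n) \<longlonglongrightarrow> a - b" by (intro tendsto_diff xa(2) xb(2))
  ultimately show ?thesis unfolding closure_sequential by (intro exI[of _ "\<lambda>n. xa n - xb n"]) simp
qed

lemma fund_unique:
  fixes D H :: "'a::complex_hilbert \<Rightarrow> 'a"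
  assumes bl: "bounded_linear D" and sym: "\<And>x y. inner (D x) y = inner x (D y)"
    and into: "\<And>y. y \<in> closure (range D) \<Longrightarrow> H y \<in> closure (range D)"
    and add: "\<And>a b. a \<in> closure (range D) \<Longrightarrow> b \<in> closure (range D) \<Longrightarrow> H (a + b) = H a + H b"
    and bnd: "\<And>y. y \<in> closure (range D) \<Longrightarrow> norm (H y) \<le> K * norm y"
    and z: "\<And>x. D (H (D x)) = 0"
    and y: "y \<in> closure (range D)"
  shows "H y = 0"
proof -
  have HD0: "H (D x) = 0" for x
  proof -
    define w where "w = H (D x)"
    have wD: "w \<in> closure (range D)" unfolding w_def by (intro into closure_subset[THEN subsetD]) simp
    have "range D \<subseteq> {v. inner w v = 0}"
    proof
      fix v assume "v \<in> range D"
      then obtain u where "v = D u" by blast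
      have "inner w (D u) = inner (D w) u" by (simp add: sym)
      also have "D w = 0" by (simp add: w_def z)
      finally show "v \<in> {v. inner w v = 0}" using \<open>v = D u\<close> by simp
    qed
    hence "closure (range D) \<subseteq> {v. inner w v = 0}"
      by (rule closure_minimal) (rule closed_hyperplane)
    hence "inner w w = 0" using wD by blast
    thus ?thesis by (simp add: w_def)
  qed
  obtain xs where xs: "\<And>n. xs n \<in> range D" "xs \<longlonglongrightarrow> y" using y unfolding closure_sequential by blast
  have le: "norm (H y) \<le> K * norm (y - xs n)" for n
  proof -
    obtain u where u: "xs n = D u" using xs(1)[of n] by blast
    have Dc: "D u \<in> closure (range D)" by (intro closure_subset[THEN subsetD]) simp
    have "H y = H ((y - D u) + D u)" by simp
    also have "\<dots> = H (y - D u) + H (D u)"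
      by (rule add) (use closure_diff_range[OF bl y Dc] Dc in auto)
    finally have "H y = H (y - D u)" by (simp add: HD0)
    thus ?thesis using bnd[OF closure_diff_range[OF bl y Dc]] u by simp
  qed
  have "(\<lambda>n. K * norm (y - xs n)) \<longlonglongrightarrow> K * norm (y - y)"
    by (intro tendsto_intros xs(2))
  hence "norm (H y) \<le> K * norm (y - y)" using le by (intro LIMSEQ_le_const) auto
  thus ?thesis by simp
qed

lemma closure_unitary_image:
  assumes "unitary_op (U :: 'a::complex_hilbert \<Rightarrow> 'b::complex_hilbert)"
  shows "closure (U ` R) = U ` closure R"
proof -
  have uv: "unitary_op (inv U)" and UV: "\<And>y. U (inv U y) = y" and VU: "\<And>x. inv U (U x) = x"
    using unitary_inv[OF assms] by auto
  have cU: "continuous_on A U" for A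
    using assms by (intro linear_continuous_on) (simp add: unitary_op_def bounded_clinear_op_def)
  have cV: "continuous_on A (inv U)" for A
    using uv by (intro linear_continuous_on) (simp add: unitary_op_def bounded_clinear_op_def)
  have 1: "U ` closure R \<subseteq> closure (U ` R)"
    by (rule image_closure_subset[OF cU closed_closure closure_subset])
  have "inv U ` closure (U ` R) \<subseteq> closure (inv U ` U ` R)"
    by (rule image_closure_subset[OF cV closed_closure closure_subset])
  also have "inv U ` U ` R = R" by (simp add: image_image VU)
  finally have "U ` inv U ` closure (U ` R) \<subseteq> U ` closure R" by (rule image_mono)
  hence 2: "closure (U ` R) \<subseteq> U ` closure R" by (simp add: image_image UV)
  show ?thesis using 1 2 by blast
qed

theorem proposition4p12:
  fixes S11 S12 P1 F1 F2 :: "'a::complex_hilbert \<Rightarrow> 'a"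
    and S21 S22 P2 G1 G2 :: "'b::complex_hilbert \<Rightarrow> 'b"
    and U :: "'a \<Rightarrow> 'b"
  assumes "gamma3_contraction S11 S12 P1"
    and "gamma3_contraction S21 S22 P2"
    and "fundamental_pair S11 S12 P1 F1 F2"
    and "fundamental_pair S21 S22 P2 G1 G2"
    and "unitary_op U"
    and "U \<circ> S11 = S21 \<circ> U" and "U \<circ> S12 = S22 \<circ> U" and "U \<circ> P1 = P2 \<circ> U"
  shows "\<exists>V :: 'a \<Rightarrow> 'b. unitary_between (defect_space P1) (defect_space P2) V \<and>
           (\<forall>y\<in>defect_space P2. V (F1 (inv_into (defect_space P1) V y)) = G1 y) \<and>
           (\<forall>y\<in>defect_space P2. V (F2 (inv_into (defect_space P1) V y)) = G2 y)"
proof -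
  have ct1: "commuting_triple S11 S12 P1" and ct2: "commuting_triple S21 S22 P2"
    using assms(1,2) by (simp_all add: gamma3_contraction_def)
  have P1cl: "bounded_clinear_op P1" and S11cl: "bounded_clinear_op S11" and S12cl: "bounded_clinear_op S12"
    using ct1 by (simp_all add: commuting_triple_def)
  have P2cl: "bounded_clinear_op P2" and S21cl: "bounded_clinear_op S21" and S22cl: "bounded_clinear_op S22"
    using ct2 by (simp_all add: commuting_triple_def)
  have P1bl: "bounded_linear P1" and S11bl: "bounded_linear S11" and S12bl: "bounded_linear S12"
    and P2bl: "bounded_linear P2" and S21bl: "bounded_linear S21" and S22bl: "bounded_linear S22"
    using P1cl S11cl S12cl P2cl S21cl S22cl by (simp_all add: bounded_clinear_op_def)
  have P1n: "\<And>x. norm (P1 x) \<le> norm x" by (rule gamma3_contr[OF assms(1)])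
  have P2n: "\<And>x. norm (P2 x) \<le> norm x" by (rule gamma3_contr[OF assms(2)])
  define Ui where "Ui = inv U"
  have uU: "unitary_op U" by (rule assms(5))
  have uUi: "unitary_op Ui" and UUi: "\<And>y. U (Ui y) = y" and UiU: "\<And>x. Ui (U x) = x"
    using unitary_inv[OF uU] by (auto simp: Ui_def)
  have Ubl: "bounded_linear U" and Ucl: "\<And>c x. U (scaleC c x) = scaleC c (U x)"
    and Un: "\<And>x. norm (U x) = norm x" and Ubij: "bij U"
    using uU by (auto simp: unitary_op_def bounded_clinear_op_def)
  have Uibl: "bounded_linear Ui" and Uicl: "\<And>c x. Ui (scaleC c x) = scaleC c (Ui x)"
    and Uin: "\<And>x. norm (Ui x) = norm x"
    using uUi by (auto simp: unitary_op_def bounded_clinear_op_def)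
  have inner_U: "inner (U a) b = inner a (Ui b)" for a b
    using unitary_inner[OF uU, of a "Ui b"] by (simp add: UUi)
  have inner_Ui: "inner (Ui a) b = inner a (U b)" for a b
    using unitary_inner[OF uUi, of a "U b"] by (simp add: UiU)
  have S21e: "S21 x = U (S11 (Ui x))" for x using fun_cong[OF assms(6), of "Ui x"] by (simp add: UUi)
  have S22e: "S22 x = U (S12 (Ui x))" for x using fun_cong[OF assms(7), of "Ui x"] by (simp add: UUi)
  have P2e: "P2 x = U (P1 (Ui x))" for x using fun_cong[OF assms(8), of "Ui x"] by (simp add: UUi)
  have adjT: "adj T = (\<lambda>y. U (adj S (Ui y)))"
    if blS: "bounded_linear S" and blT: "bounded_linear T" and e: "\<And>x. T x = U (S (Ui x))" for S T
  proof (rule adj_eqI[OF blT])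
    fix x y
    have "inner (T x) y = inner (S (Ui x)) (Ui y)" by (simp add: e inner_U)
    also have "\<dots> = inner (Ui x) (adj S (Ui y))" by (rule adj_inner[OF blS])
    also have "\<dots> = inner x (U (adj S (Ui y)))" by (rule inner_Ui)
    finally show "inner (T x) y = inner x (U (adj S (Ui y)))" .
  qed
  have adjS21: "adj S21 = (\<lambda>y. U (adj S11 (Ui y)))" by (rule adjT[OF S11bl S21bl S21e])
  have adjS22: "adj S22 = (\<lambda>y. U (adj S12 (Ui y)))" by (rule adjT[OF S12bl S22bl S22e])
  have adjP2: "adj P2 = (\<lambda>y. U (adj P1 (Ui y)))" by (rule adjT[OF P1bl P2bl P2e])
  define D1 where "D1 = defect_op P1"
  define D2 where "D2 = defect_op P2"
  have D1pos: "positive_op D1" and D1sq: "D1 \<circ> D1 = (\<lambda>x. x - adj P1 (P1 x))"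
    using defect_facts(1,2)[OF P1cl P1n] by (simp_all add: D1_def)
  have D1bl: "bounded_linear D1" and D1cl: "\<And>c x. D1 (scaleC c x) = scaleC c (D1 x)"
    using D1pos by (auto simp: positive_op_def bounded_clinear_op_def)
  have D1sym: "inner (D1 x) y = inner x (D1 y)" for x y
    using adj_inner[OF D1bl, of x y] D1pos by (simp add: positive_op_def)
  have D1ps: "inner (D1 x) x \<ge> 0" for x using D1pos by (simp add: positive_op_def)
  have D1D1: "D1 (D1 x) = x - adj P1 (P1 x)" for x using fun_cong[OF D1sq, of x] by simp
  define B where "B y = U (D1 (Ui y))" for y
  have Bbl: "bounded_linear B"
    unfolding B_def[abs_def] by (rule bounded_linear_compose[OF Ubl bounded_linear_compose[OF D1bl Uibl]])
  have Bpos: "positive_op B"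
  proof -
    have "B (scaleC c x) = scaleC c (B x)" for c x by (simp add: B_def Ucl Uicl D1cl)
    moreover have "adj B = B"
    proof (rule adj_eqI[OF Bbl])
      fix x y
      show "inner (B x) y = inner x (B y)"
        by (simp add: B_def inner_U D1sym inner_Ui)
    qed
    moreover have "inner (B x) x \<ge> 0" for x
      using D1ps[of "Ui x"] by (simp add: B_def inner_U)
    ultimately show ?thesis using Bbl by (simp add: positive_op_def bounded_clinear_op_def)
  qed
  have Bsq: "B \<circ> B = (\<lambda>x. x - adj P2 (P2 x))"
  proof
    fix x
    have "(B \<circ> B) x = U (D1 (D1 (Ui x)))" by (simp add: B_def UiU)
    also have "\<dots> = U (Ui x - adj P1 (P1 (Ui x)))" by (simp add: D1D1)
    also have "\<dots> = x - U (adj P1 (P1 (Ui x)))" by (simp add: bl_diff[OF Ubl] UUi)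
    also have "U (adj P1 (P1 (Ui x))) = adj P2 (P2 x)" by (simp add: adjP2 P2e UiU)
    finally show "(B \<circ> B) x = x - adj P2 (P2 x)" .
  qed
  have D2e: "D2 = B" unfolding D2_def by (rule defect_facts(3)[OF P2cl P2n Bpos Bsq, symmetric])
  have D2bl: "bounded_linear D2" using Bbl D2e by simp
  have D2sym: "inner (D2 x) y = inner x (D2 y)" for x y
    using Bpos D2e adj_inner[OF Bbl, of x y] by (simp add: positive_op_def)
  have DS1: "defect_space P1 = closure (range D1)" by (simp add: defect_space_def D1_def)
  have DS2: "defect_space P2 = closure (range D2)" by (simp add: defect_space_def D2_def)
  have rng: "range D2 = U ` range D1"
  proof -
    have "range D2 = (\<lambda>y. U (D1 (Ui y))) ` UNIV" by (simp add: D2e B_def[abs_def])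
    also have "\<dots> = U ` D1 ` Ui ` UNIV" by (simp add: image_image)
    also have "Ui ` UNIV = UNIV" by (metis UiU surj_def)
    finally show ?thesis by simp
  qed
  have DS2U: "closure (range D2) = U ` closure (range D1)"
    unfolding rng by (rule closure_unitary_image[OF uU])
  have injU: "inj U" using Ubij by (simp add: bij_is_inj)
  have UiDS: "Ui y \<in> closure (range D1)" if "y \<in> closure (range D2)" for y
    using that DS2U UiU by auto
  have UDS: "U x \<in> closure (range D2)" if "x \<in> closure (range D1)" for x
    using that DS2U by auto
  have invV: "inv_into (closure (range D1)) U y = Ui y" if yD: "y \<in> closure (range D2)" for y
  proof -
    obtain x where x: "x \<in> closure (range D1)" "y = U x" using yD DS2U by auto
    have "inv_into (closure (range D1)) U (U x) = x"
      by (rule inv_into_f_f[OF inj_on_subset[OF injU subset_UNIV] x(1)])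
    thus ?thesis using x by (simp add: UiU)
  qed
  have trans: "\<forall>y\<in>closure (range D2). U (F (Ui y)) = G y"
    if Fin: "F ` closure (range D1) \<subseteq> closure (range D1)"
      and Gin: "G ` closure (range D2) \<subseteq> closure (range D2)"
      and Fb: "bounded_clinear_on (closure (range D1)) F"
      and Gb: "bounded_clinear_on (closure (range D2)) G"
      and key: "\<And>x. D2 (G (D2 x)) = U (D1 (F (D1 (Ui x))))"
    for F G
  proof
    fix y assume y: "y \<in> closure (range D2)"
    obtain KF where KF: "\<And>x. x \<in> closure (range D1) \<Longrightarrow> norm (F x) \<le> KF * norm x"
      using Fb unfolding bounded_clinear_on_def by blast
    obtain KG where KG: "\<And>x. x \<in> closure (range D2) \<Longrightarrow> norm (G x) \<le> KG * norm x"
      using Gb unfolding bounded_clinear_on_def by blast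
    have Fadd: "\<And>a b. a \<in> closure (range D1) \<Longrightarrow> b \<in> closure (range D1) \<Longrightarrow> F (a + b) = F a + F b"
      using Fb by (simp add: bounded_clinear_on_def)
    have Gadd: "\<And>a b. a \<in> closure (range D2) \<Longrightarrow> b \<in> closure (range D2) \<Longrightarrow> G (a + b) = G a + G b"
      using Gb by (simp add: bounded_clinear_on_def)
    define H where "H y = G y - U (F (Ui y))" for y
    have "H y = 0"
    proof (rule fund_unique[OF D2bl D2sym, where K="KG + KF" and H=H and y=y])
      fix z assume z: "z \<in> closure (range D2)"
      have "G z \<in> closure (range D2)" using Gin z by blast
      moreover have "U (F (Ui z)) \<in> closure (range D2)"
        using UDS Fin UiDS[OF z] by blast
      ultimately show "H z \<in> closure (range D2)"
        unfolding H_def by (rule closure_diff_range[OF D2bl])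
    next
      fix a b assume a: "a \<in> closure (range D2)" and b: "b \<in> closure (range D2)"
      show "H (a + b) = H a + H b"
        using Gadd[OF a b] Fadd[OF UiDS[OF a] UiDS[OF b]]
        by (simp add: H_def bl_add[OF Uibl] bl_add[OF Ubl])
    next
      fix z assume z: "z \<in> closure (range D2)"
      have "norm (H z) \<le> norm (G z) + norm (U (F (Ui z)))"
        unfolding H_def by (rule norm_triangle_ineq4)
      also have "\<dots> \<le> KG * norm z + KF * norm z"
        using KG[OF z] KF[OF UiDS[OF z]] by (simp add: Un Uin)
      finally show "norm (H z) \<le> (KG + KF) * norm z" by (simp add: distrib_right)
    next
      fix x
      have "D2 (U (F (Ui (D2 x)))) = U (D1 (F (D1 (Ui x))))"
        by (simp add: D2e B_def UiU)
      thus "D2 (H (D2 x)) = 0" by (simp add: H_def bl_diff[OF D2bl] key)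
    next
      show "y \<in> closure (range D2)" by (rule y)
    qed
    thus "U (F (Ui y)) = G y" by (simp add: H_def)
  qed
  have fp1: "F1 ` closure (range D1) \<subseteq> closure (range D1)" "F2 ` closure (range D1) \<subseteq> closure (range D1)"
    "bounded_clinear_on (closure (range D1)) F1" "bounded_clinear_on (closure (range D1)) F2"
    "\<And>x. S11 x - adj S12 (P1 x) = D1 (F1 (D1 x))" "\<And>x. S12 x - adj S11 (P1 x) = D1 (F2 (D1 x))"
    using assms(3) unfolding fundamental_pair_def DS1 D1_def[symmetric] by simp_all
  have fp2: "G1 ` closure (range D2) \<subseteq> closure (range D2)" "G2 ` closure (range D2) \<subseteq> closure (range D2)"
    "bounded_clinear_on (closure (range D2)) G1" "bounded_clinear_on (closure (range D2)) G2"
    "\<And>x. S21 x - adj S22 (P2 x) = D2 (G1 (D2 x))" "\<And>x. S22 x - adj S21 (P2 x) = D2 (G2 (D2 x))"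
    using assms(4) unfolding fundamental_pair_def DS2 D2_def[symmetric] by simp_all
  have k1: "D2 (G1 (D2 x)) = U (D1 (F1 (D1 (Ui x))))" for x
  proof -
    have "D2 (G1 (D2 x)) = S21 x - adj S22 (P2 x)" by (simp add: fp2(5))
    also have "\<dots> = U (S11 (Ui x) - adj S12 (P1 (Ui x)))"
      by (simp add: S21e adjS22 P2e UiU bl_diff[OF Ubl])
    also have "\<dots> = U (D1 (F1 (D1 (Ui x))))" by (simp add: fp1(5))
    finally show ?thesis .
  qed
  have k2: "D2 (G2 (D2 x)) = U (D1 (F2 (D1 (Ui x))))" for x
  proof -
    have "D2 (G2 (D2 x)) = S22 x - adj S21 (P2 x)" by (simp add: fp2(6))
    also have "\<dots> = U (S12 (Ui x) - adj S11 (P1 (Ui x)))"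
      by (simp add: S22e adjS21 P2e UiU bl_diff[OF Ubl])
    also have "\<dots> = U (D1 (F2 (D1 (Ui x))))" by (simp add: fp1(6))
    finally show ?thesis .
  qed
  have t1: "\<forall>y\<in>closure (range D2). U (F1 (Ui y)) = G1 y"
    by (rule trans[OF fp1(1) fp2(1) fp1(3) fp2(3) k1])
  have t2: "\<forall>y\<in>closure (range D2). U (F2 (Ui y)) = G2 y"
    by (rule trans[OF fp1(2) fp2(2) fp1(4) fp2(4) k2])
  have ub: "unitary_between (closure (range D1)) (closure (range D2)) U"
    unfolding unitary_between_def bounded_clinear_on_def
  proof (intro conjI ballI allI)
    show "\<And>x y. U (x + y) = U x + U y" by (rule bl_add[OF Ubl])
    show "\<And>c x. U (scaleC c x) = scaleC c (U x)" by (rule Ucl)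
    show "\<exists>K. \<forall>x\<in>closure (range D1). norm (U x) \<le> K * norm x" by (intro exI[of _ 1]) (simp add: Un)
    show "bij_betw U (closure (range D1)) (closure (range D2))"
      unfolding bij_betw_def using DS2U inj_on_subset[OF injU subset_UNIV] by simp
    show "\<And>x. norm (U x) = norm x" by (rule Un)
  qed
  show ?thesis
    unfolding DS1 DS2
    by (intro exI[of _ U] conjI ub) (simp_all add: invV t1 t2)
qed

end
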